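(* Let $(\Xi,\mathcal{F},P)$ be a probability space with a filtration of sub-$\sigma$-algebras $\mathcal{F}_1\subset\mathcal{F}_2\subset\cdots\subset\mathcal{F}$, where $\mathcal{F}_1=\{\emptyset,\Xi\}$. Let $\mathcal{Z}_t$ denote the space of (almost surely bounded) $\mathcal{F}_t$-measurable functions $\Xi\to\mathbb{R}$, and $\mathcal{Z}_{t,\infty}:=\mathcal{Z}_t\times\mathcal{Z}_{t+1}\times\cdots$. For each $t\ge 2$ let $\rho_t:\mathcal{Z}_t\to\mathcal{Z}_{t-1}$ be a coherent one-step conditional risk measure, and for $t\ge 3$ define $\tilde\rho_t:=\mathbb{E}[\,\cdot\,|\mathcal{F}_{t-2}]\circ\rho_t:\mathcal{Z}_t\to\mathcal{Z}_{t-2}$. Fix $0<\gamma<1$. For almost surely bounded sequences $Z_{[k,\infty]}\in\mathcal{Z}_{k,\infty}$ define the dynamic risk measure $\{\mathbb{F}_{k,\infty}\}_{k\ge1}$ by $$\mathbb{F}_{1,\infty}(Z_{[1,\infty]})=Z_1+\rho_2\Big(\gamma Z_2+\tilde\rho_3\Big(\gamma^2 Z_3+\tilde\rho_4\Big(\gamma^3 Z_4+\cdots\Big)\Big)\Big),$$ and for $k\ge 2$ $$\mathbb{F}_{k,\infty}(Z_{[k,\infty]})=\gamma^{k-1}Z_k+\tilde\rho_{k+1}\Big(\gamma^{k}Z_{k+1}+\tilde\rho_{k+2}\Big(\gamma^{k+1}Z_{k+2}+\cdots\Big)\Big),$$ where each infinitely nested expression is understood as the limit as $T\to\infty$ of the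 corresponding expression truncated after the term $\gamma^{T-1}Z_T$ (this limit exists for almost surely bounded sequences). Then $\{\mathbb{F}_{k,\infty}\}_{k\ge1}$ is time consistent: for all $1\le l<k$ and all almost surely bounded $Z_{[l,\infty]},W_{[l,\infty]}\in\mathcal{Z}_{l,\infty}$, if $Z_i=W_i$ for all $i=l,\ldots,k-1$ and $\mathbb{F}_{k,\infty}(Z_{[k,\infty]})\ge\mathbb{F}_{k,\infty}(W_{[k,\infty]})$, then $\mathbb{F}_{l,\infty}(Z_{[l,\infty]})\ge\mathbb{F}_{l,\infty}(W_{[l,\infty]})$.
   Context: A coherent one-step conditional risk measure is a mapping $\rho:\mathcal{Z}_{k+1}\to\mathcal{Z}_k$ satisfying: (1) monotonicity: $Z_1\ge Z_2$ implies $\rho(Z_1)\ge\rho(Z_2)$; (2) convexity: $\rho(cZ_1+(1-c)Z_2)\le c\rho(Z_1)+(1-c)\rho(Z_2)$ for $c\in[0,1]$; (3) translation invariance: $\rho(Z+W)=\rho(Z)+W$ for $W\in\mathcal{Z}_k$, $Z\in\mathcal{Z}_{k+1}$; (4) positive homogeneity: $\rho(cZ)=c\rho(Z)$ for $c\ge0$. All inequalities between random variables are almost sure. A sequence $Z_{[1,\infty]}$ is almost surely bounded if $\sup_t \operatorname{ess\,sup}|Z_t|<\infty$. In the paper, $Z_t$ are immediate rewards $r_t$ of an MDP and $\mathcal{F}_t$ is generated by the state history $s_{[1,t]}$; a typical choice is $\rho_t(r_t)=(1-\lambda_t)\mathbb{E}[r_t|\mathcal{F}_{t-1}]+\lambda_t\,\mathrm{CVaR}_{\alpha_t}[r_t|\mathcal{F}_{t-1}]$.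 *)

theory Defs
  imports "HOL-Probability.Probability"
begin

definition Zsp :: "'a measure \<Rightarrow> (nat \<Rightarrow> 'a measure) \<Rightarrow> nat \<Rightarrow> ('a \<Rightarrow> real) set" where
  "Zsp M F t = {X. X \<in> borel_measurable (F t) \<and> (\<exists>C. AE x in M. \<bar>X x\<bar> \<le> C)}"

definition coherent_one_step :: "'a measure \<Rightarrow> (nat \<Rightarrow> 'a measure) \<Rightarrow> nat \<Rightarrow> (('a \<Rightarrow> real) \<Rightarrow> ('a \<Rightarrow> real)) \<Rightarrow> bool" where
  "coherent_one_step M F t \<rho> \<longleftrightarrow>
     (\<forall>Z \<in> Zsp M F t. \<rho> Z \<in> Zsp M F (t - 1)) \<and>
     (\<forall>Z1 \<in> Zsp M F t. \<forall>Z2 \<in> Zsp M F t.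
        (AE x in M. Z1 x \<ge> Z2 x) \<longrightarrow> (AE x in M. \<rho> Z1 x \<ge> \<rho> Z2 x)) \<and>
     (\<forall>Z1 \<in> Zsp M F t. \<forall>Z2 \<in> Zsp M F t. \<forall>c::real. 0 \<le> c \<and> c \<le> 1 \<longrightarrow>
        (AE x in M. \<rho> (\<lambda>y. c * Z1 y + (1 - c) * Z2 y) x \<le> c * \<rho> Z1 x + (1 - c) * \<rho> Z2 x)) \<and>
     (\<forall>Z \<in> Zsp M F t. \<forall>W \<in> Zsp M F (t - 1).
        (AE x in M. \<rho> (\<lambda>y. Z y + W y) x = \<rho> Z x + W x)) \<and>
     (\<forall>Z \<in> Zsp M F t. \<forall>c::real. 0 \<le> c \<longrightarrow>
        (AE x in M. \<rho> (\<lambda>y. c * Z y) x = c * \<rho> Z x))"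

definition rop :: "'a measure \<Rightarrow> (nat \<Rightarrow> 'a measure) \<Rightarrow> (nat \<Rightarrow> ('a \<Rightarrow> real) \<Rightarrow> ('a \<Rightarrow> real))
                   \<Rightarrow> nat \<Rightarrow> ('a \<Rightarrow> real) \<Rightarrow> ('a \<Rightarrow> real)" where
  "rop M F \<rho> t X = (if t = 2 then \<rho> 2 X else real_cond_exp M (F (t - 2)) (\<rho> t X))"

text \<open>Thus nest (T-k) k Z is F_(k,infinity) truncated after gamma^(T-1) Z_T.\<close>
fun nest :: "'a measure \<Rightarrow> (nat \<Rightarrow> 'a measure) \<Rightarrow> (nat \<Rightarrow> ('a \<Rightarrow> real) \<Rightarrow> ('a \<Rightarrow> real))
              \<Rightarrow> real \<Rightarrow> nat \<Rightarrow> nat \<Rightarrow> (nat \<Rightarrow> 'a \<Rightarrow> real) \<Rightarrow> ('a \<Rightarrow> real)" where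
  "nest M F \<rho> \<gamma> 0 j Z = (\<lambda>x. \<gamma> ^ (j - 1) * Z j x)"
| "nest M F \<rho> \<gamma> (Suc n) j Z =
     (\<lambda>x. \<gamma> ^ (j - 1) * Z j x + rop M F \<rho> (Suc j) (nest M F \<rho> \<gamma> n (Suc j) Z) x)"

definition Finf :: "'a measure \<Rightarrow> (nat \<Rightarrow> 'a measure) \<Rightarrow> (nat \<Rightarrow> ('a \<Rightarrow> real) \<Rightarrow> ('a \<Rightarrow> real))
              \<Rightarrow> real \<Rightarrow> nat \<Rightarrow> (nat \<Rightarrow> 'a \<Rightarrow> real) \<Rightarrow> ('a \<Rightarrow> real)" where
  "Finf M F \<rho> \<gamma> k Z = (\<lambda>x. lim (\<lambda>n. nest M F \<rho> \<gamma> n k Z x))"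

definition bounded_seq :: "'a measure \<Rightarrow> (nat \<Rightarrow> 'a measure) \<Rightarrow> nat \<Rightarrow> (nat \<Rightarrow> 'a \<Rightarrow> real) \<Rightarrow> bool" where
  "bounded_seq M F l Z \<longleftrightarrow> (\<forall>i\<ge>l. Z i \<in> Zsp M F i) \<and>
     (\<exists>C. \<forall>i\<ge>l. AE x in M. \<bar>Z i x\<bar> \<le> C)"

end

theory Submission imports Defs begin
lemma geom_conv:
  fixes f :: "nat \<Rightarrow> real"
  assumes d: "\<And>n. \<bar>f (Suc n) - f n\<bar> \<le> K * q^n" and q: "0 \<le> q" "q < 1"
  shows "convergent f \<and> (\<forall>n. \<bar>lim f - f n\<bar> \<le> K * q^n / (1-q))"
proof -
  have K0: "K \<ge> 0" using d[of 0] by simp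
  have tail: "\<bar>f (n+m) - f n\<bar> \<le> K*q^n*(1 - q^m)/(1-q)" for n m
  proof (induction m)
    case 0 then show ?case by simp
  next
    case (Suc m)
    have "\<bar>f (n + Suc m) - f n\<bar> \<le> \<bar>f (Suc (n+m)) - f (n+m)\<bar> + \<bar>f (n+m) - f n\<bar>" by simp
    also have "\<dots> \<le> K*q^(n+m) + K*q^n*(1 - q^m)/(1-q)" using d[of "n+m"] Suc by linarith
    also have "\<dots> = K*q^n*(1 - q^Suc m)/(1-q)" using q by (simp add: field_simps power_add)
    finally show ?case .
  qed
  have tail2: "\<bar>f m - f n\<bar> \<le> K*q^n/(1-q)" if "n \<le> m" for n m
  proof -
    have "\<bar>f m - f n\<bar> \<le> K*q^n*(1 - q^(m-n))/(1-q)" using tail[of n "m-n"] that by simp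
    also have "\<dots> \<le> K*q^n/(1-q)"
    proof (rule divide_right_mono)
      show "K*q^n*(1 - q^(m-n)) \<le> K*q^n"
        using mult_left_mono[of "1 - q^(m-n)" 1 "K*q^n"] q K0 by simp
    qed (use q in simp)
    finally show ?thesis .
  qed
  have lim0: "(\<lambda>N. K*q^N/(1-q)) \<longlonglongrightarrow> 0"
    using q by (auto intro!: tendsto_eq_intros LIMSEQ_power_zero)
  have C: "Cauchy f"
  proof (rule CauchyI)
    fix e :: real assume e: "0 < e"
    have "eventually (\<lambda>N. K*q^N/(1-q) < e/2) sequentially"
      using order_tendstoD(2)[OF lim0, of "e/2"] e by simp
    then obtain N where N: "K*q^N/(1-q) < e/2" by (auto simp: eventually_sequentially)
    show "\<exists>M. \<forall>m\<ge>M. \<forall>n\<ge>M. norm (f m - f n) < e"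
    proof (intro exI allI impI)
      fix m n assume "N \<le> m" "N \<le> n"
      then have "\<bar>f m - f N\<bar> \<le> K*q^N/(1-q)" "\<bar>f n - f N\<bar> \<le> K*q^N/(1-q)" using tail2 by auto
      then show "norm (f m - f n) < e" unfolding real_norm_def using N by linarith
    qed
  qed
  then have cv: "convergent f" by (simp add: Cauchy_convergent_iff)
  then have fl: "f \<longlonglongrightarrow> lim f" by (simp add: convergent_LIMSEQ_iff)
  have "\<bar>lim f - f n\<bar> \<le> K * q^n / (1-q)" for n
  proof (rule LIMSEQ_le_const2)
    show "(\<lambda>m. \<bar>f m - f n\<bar>) \<longlonglongrightarrow> \<bar>lim f - f n\<bar>" by (intro tendsto_intros fl)
    show "\<exists>N. \<forall>m\<ge>N. \<bar>f m - f n\<bar> \<le> K * q ^ n / (1 - q)" using tail2 by blast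
  qed
  with cv show ?thesis by blast
qed

locale rsetting = prob_space M for M :: "'a measure" +
  fixes F :: "nat \<Rightarrow> 'a measure" and \<rho> :: "nat \<Rightarrow> ('a \<Rightarrow> real) \<Rightarrow> ('a \<Rightarrow> real)" and \<gamma> :: real
  assumes sub: "\<And>t. t \<ge> 1 \<Longrightarrow> subalgebra M (F t)"
    and filt: "\<And>t. t \<ge> 1 \<Longrightarrow> sets (F t) \<subseteq> sets (F (Suc t))"
    and coh: "\<And>t. t \<ge> 2 \<Longrightarrow> coherent_one_step M F t (\<rho> t)"
    and g0: "0 < \<gamma>" and g1: "\<gamma> < 1"
begin

lemma sets_mono: assumes "1 \<le> a" "a \<le> b" shows "sets (F a) \<subseteq> sets (F b)"
  using assms(2)
proof (induction b rule: dec_induct)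
  case base then show ?case by simp
next
  case (step n) then show ?case using filt[of n] assms(1) by auto
qed

lemma meas_mono:
  assumes "1 \<le> a" "a \<le> b" "f \<in> borel_measurable (F a)"
  shows "f \<in> borel_measurable (F b)"
proof (rule measurable_from_subalg[OF _ assms(3)])
  show "subalgebra (F b) (F a)"
    using sets_mono[OF assms(1,2)] sub[of a] sub[of b] assms(1,2) by (auto simp: subalgebra_def)
qed

lemma Zsp_mono: "1 \<le> a \<Longrightarrow> a \<le> b \<Longrightarrow> X \<in> Zsp M F a \<Longrightarrow> X \<in> Zsp M F b"
  unfolding Zsp_def using meas_mono by blast

lemma Zsp_M: "1 \<le> t \<Longrightarrow> X \<in> Zsp M F t \<Longrightarrow> X \<in> borel_measurable M"
  unfolding Zsp_def using measurable_from_subalg[OF sub] by blast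

lemma Zsp_int: "1 \<le> t \<Longrightarrow> X \<in> Zsp M F t \<Longrightarrow> integrable M X"
proof -
  assume a: "1 \<le> t" "X \<in> Zsp M F t"
  then obtain C where "AE x in M. \<bar>X x\<bar> \<le> C" by (auto simp: Zsp_def)
  then show ?thesis using Zsp_M[OF a] by (intro integrable_const_bound[where B=C]) auto
qed

lemma Zsp_const: "(\<lambda>_. c) \<in> Zsp M F t"
  unfolding Zsp_def by (auto intro!: exI[of _ "\<bar>c\<bar>"])

lemma Zsp_add: "X \<in> Zsp M F t \<Longrightarrow> Y \<in> Zsp M F t \<Longrightarrow> (\<lambda>x. X x + Y x) \<in> Zsp M F t"
proof -
  assume a: "X \<in> Zsp M F t" "Y \<in> Zsp M F t"
  then obtain C D where "AE x in M. \<bar>X x\<bar> \<le> C" "AE x in M. \<bar>Y x\<bar> \<le> D" by (auto simp: Zsp_def)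
  then have "AE x in M. \<bar>X x + Y x\<bar> \<le> C + D" by eventually_elim auto
  then show ?thesis using a by (auto simp: Zsp_def)
qed

lemma Zsp_cmult: "X \<in> Zsp M F t \<Longrightarrow> (\<lambda>x. c * X x) \<in> Zsp M F t"
proof -
  assume a: "X \<in> Zsp M F t"
  then obtain C where C: "AE x in M. \<bar>X x\<bar> \<le> C" by (auto simp: Zsp_def)
  then have "AE x in M. \<bar>c * X x\<bar> \<le> \<bar>c\<bar> * C"
    by eventually_elim (auto simp: abs_mult intro: mult_left_mono)
  then show ?thesis using a by (auto simp: Zsp_def)
qed

lemma ce: "1 \<le> s \<Longrightarrow> sigma_finite_subalgebra M (F s)"
proof -
  assume "1 \<le> s"
  then have "finite_measure_subalgebra M (F s)"
    by (simp add: finite_measure_subalgebra_def finite_measure_subalgebra_axioms_def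
          finite_measure_axioms sub)
  then show ?thesis by (rule finite_measure_subalgebra_is_sigma_finite)
qed


lemma coh_Zsp: "2 \<le> t \<Longrightarrow> Z \<in> Zsp M F t \<Longrightarrow> \<rho> t Z \<in> Zsp M F (t-1)"
  using coh[of t] unfolding coherent_one_step_def by blast
lemma coh_mono: "2 \<le> t \<Longrightarrow> Z1 \<in> Zsp M F t \<Longrightarrow> Z2 \<in> Zsp M F t \<Longrightarrow> (AE x in M. Z1 x \<ge> Z2 x) \<Longrightarrow> (AE x in M. \<rho> t Z1 x \<ge> \<rho> t Z2 x)"
  using coh[of t] unfolding coherent_one_step_def by blast
lemma coh_trans: "2 \<le> t \<Longrightarrow> Z \<in> Zsp M F t \<Longrightarrow> W \<in> Zsp M F (t-1) \<Longrightarrow> (AE x in M. \<rho> t (\<lambda>y. Z y + W y) x = \<rho> t Z x + W x)"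
  using coh[of t] unfolding coherent_one_step_def by blast
lemma coh_hom: "2 \<le> t \<Longrightarrow> Z \<in> Zsp M F t \<Longrightarrow> 0 \<le> c \<Longrightarrow> (AE x in M. \<rho> t (\<lambda>y. c * Z y) x = c * \<rho> t Z x)"
  using coh[of t] unfolding coherent_one_step_def by blast

lemma ropE: "t \<noteq> 2 \<Longrightarrow> rop M F \<rho> t Y = real_cond_exp M (F (t-2)) (\<rho> t Y)"
  by (simp add: rop_def)

lemma rop_Zsp:
  assumes t: "2 \<le> t" and X: "X \<in> Zsp M F t"
  shows "rop M F \<rho> t X \<in> Zsp M F (t-1)"
proof (cases "t = 2")
  case True then show ?thesis using coh_Zsp[OF t X] by (simp add: rop_def)
next
  case False
  have R: "\<rho> t X \<in> Zsp M F (t-1)" by (rule coh_Zsp[OF t X])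
  have I: "integrable M (\<rho> t X)" using Zsp_int[OF _ R] t by simp
  interpret S: sigma_finite_subalgebra M "F (t-2)" using ce[of "t-2"] False t by simp
  obtain C where C: "AE x in M. \<bar>\<rho> t X x\<bar> \<le> C" using R by (auto simp: Zsp_def)
  have "AE x in M. real_cond_exp M (F (t-2)) (\<rho> t X) x \<le> C"
    using C by (intro S.real_cond_exp_le_c I) auto
  moreover have "AE x in M. real_cond_exp M (F (t-2)) (\<rho> t X) x \<ge> -C"
    using C by (intro S.real_cond_exp_ge_c I) auto
  ultimately have B: "AE x in M. \<bar>real_cond_exp M (F (t-2)) (\<rho> t X) x\<bar> \<le> C" by eventually_elim auto
  have "real_cond_exp M (F (t-2)) (\<rho> t X) \<in> borel_measurable (F (t-1))"
    by (rule meas_mono[of "t-2"]) (use False t borel_measurable_cond_exp in auto)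
  then show ?thesis using False B by (auto simp: rop_def Zsp_def)
qed

lemma rop_mono:
  assumes t: "2 \<le> t" and X: "X \<in> Zsp M F t" and Y: "Y \<in> Zsp M F t"
    and le: "AE x in M. X x \<le> Y x"
  shows "AE x in M. rop M F \<rho> t X x \<le> rop M F \<rho> t Y x"
proof -
  have m: "AE x in M. \<rho> t X x \<le> \<rho> t Y x" using coh_mono[OF t Y X le] .
  show ?thesis
  proof (cases "t = 2")
    case True then show ?thesis using m by (simp add: rop_def)
  next
    case False
    interpret S: sigma_finite_subalgebra M "F (t-2)" using ce[of "t-2"] False t by simp
    have "integrable M (\<rho> t X)" "integrable M (\<rho> t Y)"
      using Zsp_int[OF _ coh_Zsp[OF t X]] Zsp_int[OF _ coh_Zsp[OF t Y]] t by auto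
    then show ?thesis using False m S.real_cond_exp_mono by (simp add: rop_def)
  qed
qed

lemma rop_trans:
  assumes t: "2 \<le> t" and X: "X \<in> Zsp M F t"
  shows "AE x in M. rop M F \<rho> t (\<lambda>y. X y + c) x = rop M F \<rho> t X x + c"
proof -
  have m: "AE x in M. \<rho> t (\<lambda>y. X y + c) x = \<rho> t X x + c"
    using coh_trans[OF t X Zsp_const[of c]] .
  show ?thesis
  proof (cases "t = 2")
    case True then show ?thesis using m by (simp add: rop_def)
  next
    case False
    interpret S: sigma_finite_subalgebra M "F (t-2)" using ce[of "t-2"] False t by simp
    have XZ: "(\<lambda>y. X y + c) \<in> Zsp M F t" by (rule Zsp_add[OF X Zsp_const])
    have i1: "integrable M (\<rho> t X)" using Zsp_int[OF _ coh_Zsp[OF t X]] t by auto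
    have i2: "integrable M (\<rho> t (\<lambda>y. X y + c))" using Zsp_int[OF _ coh_Zsp[OF t XZ]] t by auto
    have ic: "integrable M (\<lambda>_. c)" by (rule integrable_const_bound[where B="\<bar>c\<bar>"]) auto
    have "AE x in M. real_cond_exp M (F (t-2)) (\<rho> t (\<lambda>y. X y + c)) x
        = real_cond_exp M (F (t-2)) (\<lambda>x. \<rho> t X x + c) x"
      using m i1 i2 by (intro S.real_cond_exp_cong) (auto simp: borel_measurable_integrable)
    moreover have "AE x in M. real_cond_exp M (F (t-2)) (\<lambda>x. \<rho> t X x + c) x
        = real_cond_exp M (F (t-2)) (\<rho> t X) x + real_cond_exp M (F (t-2)) (\<lambda>_. c) x"
      using S.real_cond_exp_add[OF i1 ic] .
    moreover have "AE x in M. real_cond_exp M (F (t-2)) (\<lambda>_. c) x = c"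
      using ic by (intro S.real_cond_exp_F_meas) auto
    ultimately have "AE x in M. real_cond_exp M (F (t-2)) (\<rho> t (\<lambda>y. X y + c)) x = real_cond_exp M (F (t-2)) (\<rho> t X) x + c"
      by eventually_elim simp
    then show ?thesis unfolding ropE[OF False] .
  qed
qed

lemma rop_zero:
  assumes t: "2 \<le> t"
  shows "AE x in M. rop M F \<rho> t (\<lambda>_. 0) x = 0"
proof -
  have m: "AE x in M. \<rho> t (\<lambda>_. 0) x = 0"
    using coh_hom[OF t Zsp_const[of 0], of 0] by simp
  show ?thesis
  proof (cases "t = 2")
    case True then show ?thesis using m by (simp add: rop_def)
  next
    case False
    interpret S: sigma_finite_subalgebra M "F (t-2)" using ce[of "t-2"] False t by simp
    have i1: "integrable M (\<rho> t (\<lambda>_. 0))" using Zsp_int[OF _ coh_Zsp[OF t Zsp_const]] t by auto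
    have "AE x in M. real_cond_exp M (F (t-2)) (\<rho> t (\<lambda>_. 0)) x
        = real_cond_exp M (F (t-2)) (\<lambda>_. 0) x"
      using m i1 by (intro S.real_cond_exp_cong) (auto simp: borel_measurable_integrable)
    moreover have "AE x in M. real_cond_exp M (F (t-2)) (\<lambda>_. 0) x = 0"
      by (intro S.real_cond_exp_F_meas) auto
    ultimately have "AE x in M. real_cond_exp M (F (t-2)) (\<rho> t (\<lambda>_. 0)) x = 0"
      by eventually_elim simp
    then show ?thesis unfolding ropE[OF False] .
  qed
qed

lemma rop_lip:
  assumes t: "2 \<le> t" and X: "X \<in> Zsp M F t" and Y: "Y \<in> Zsp M F t"
    and d: "AE x in M. \<bar>X x - Y x\<bar> \<le> c"
  shows "AE x in M. \<bar>rop M F \<rho> t X x - rop M F \<rho> t Y x\<bar> \<le> c"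
proof -
  have "AE x in M. X x \<le> Y x + c" using d by eventually_elim auto
  then have a1: "AE x in M. rop M F \<rho> t X x \<le> rop M F \<rho> t (\<lambda>y. Y y + c) x"
    by (intro rop_mono[OF t X Zsp_add[OF Y Zsp_const]])
  have "AE x in M. Y x \<le> X x + c" using d by eventually_elim auto
  then have a2: "AE x in M. rop M F \<rho> t Y x \<le> rop M F \<rho> t (\<lambda>y. X y + c) x"
    by (intro rop_mono[OF t Y Zsp_add[OF X Zsp_const]])
  show ?thesis using a1 a2 rop_trans[OF t X, of c] rop_trans[OF t Y, of c]
    by eventually_elim (unfold abs_le_iff, linarith)
qed


context
  fixes l :: nat and Z :: "nat \<Rightarrow> 'a \<Rightarrow> real" and B :: real
  assumes bs: "bounded_seq M F l Z" and l1: "1 \<le> l"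
    and hB: "\<And>i. l \<le> i \<Longrightarrow> AE x in M. \<bar>Z i x\<bar> \<le> B"
begin

lemma Zi: "l \<le> i \<Longrightarrow> Z i \<in> Zsp M F i"
  using bs by (simp add: bounded_seq_def)

lemma nest_Zsp: "l \<le> j \<Longrightarrow> nest M F \<rho> \<gamma> n j Z \<in> Zsp M F j"
proof (induction n arbitrary: j)
  case 0 then show ?case by (simp add: Zsp_cmult Zi)
next
  case (Suc n)
  have "rop M F \<rho> (Suc j) (nest M F \<rho> \<gamma> n (Suc j) Z) \<in> Zsp M F (Suc j - 1)"
    using Suc l1 by (intro rop_Zsp Suc.IH) auto
  then show ?case using Suc.prems by (simp only: nest.simps) (intro Zsp_add Zsp_cmult Zi, auto)
qed

lemma nest_diff: "l \<le> j \<Longrightarrow> AE x in M. \<bar>nest M F \<rho> \<gamma> (Suc n) j Z x - nest M F \<rho> \<gamma> n j Z x\<bar> \<le> \<gamma>^j * B * \<gamma>^n"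
proof (induction n arbitrary: j)
  case 0
  have t: "2 \<le> Suc j" using 0 l1 by simp
  have "AE x in M. \<bar>Z (Suc j) x\<bar> \<le> B" using 0 by (intro hB) simp
  then have "AE x in M. \<bar>\<gamma>^j * Z (Suc j) x\<bar> \<le> \<gamma>^j * B"
    by eventually_elim (use g0 in \<open>auto simp: abs_mult intro: mult_left_mono\<close>)
  then have "AE x in M. \<bar>\<gamma>^j * Z (Suc j) x - 0\<bar> \<le> \<gamma>^j * B" by simp
  then have "AE x in M. \<bar>rop M F \<rho> (Suc j) (\<lambda>x. \<gamma>^j * Z (Suc j) x) x - rop M F \<rho> (Suc j) (\<lambda>_. 0) x\<bar> \<le> \<gamma>^j * B"
    using 0 by (intro rop_lip[OF t] Zsp_cmult Zi Zsp_const) auto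
  then show ?case using rop_zero[OF t] by eventually_elim simp
next
  case (Suc n)
  have t: "2 \<le> Suc j" using Suc l1 by simp
  have "AE x in M. \<bar>rop M F \<rho> (Suc j) (nest M F \<rho> \<gamma> (Suc n) (Suc j) Z) x - rop M F \<rho> (Suc j) (nest M F \<rho> \<gamma> n (Suc j) Z) x\<bar> \<le> \<gamma>^(Suc j) * B * \<gamma>^n"
    using Suc by (intro rop_lip[OF t] nest_Zsp Suc.IH) auto
  moreover have "\<gamma>^(Suc j) * B * \<gamma>^n = \<gamma>^j * B * \<gamma>^(Suc n)" by simp
  ultimately show ?case by (simp only: nest.simps) simp
qed

lemma Finf_conv: "l \<le> j \<Longrightarrow> AE x in M. (\<lambda>n. nest M F \<rho> \<gamma> n j Z x) \<longlonglongrightarrow> Finf M F \<rho> \<gamma> j Z x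
   \<and> (\<forall>n. \<bar>Finf M F \<rho> \<gamma> j Z x - nest M F \<rho> \<gamma> n j Z x\<bar> \<le> \<gamma>^j * B * \<gamma>^n / (1-\<gamma>))"
proof -
  assume j: "l \<le> j"
  have "AE x in M. \<forall>n. \<bar>nest M F \<rho> \<gamma> (Suc n) j Z x - nest M F \<rho> \<gamma> n j Z x\<bar> \<le> \<gamma>^j * B * \<gamma>^n"
    unfolding AE_all_countable using nest_diff[OF j] by blast
  then show ?thesis
  proof eventually_elim
    case (elim x)
    have "convergent (\<lambda>n. nest M F \<rho> \<gamma> n j Z x) \<and> (\<forall>n. \<bar>lim (\<lambda>n. nest M F \<rho> \<gamma> n j Z x) - nest M F \<rho> \<gamma> n j Z x\<bar> \<le> \<gamma>^j * B * \<gamma>^n / (1-\<gamma>))"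
      using g0 g1 elim by (intro geom_conv) auto
    then show ?case by (simp add: Finf_def convergent_LIMSEQ_iff)
  qed
qed

lemma Finf_Zsp: "l \<le> j \<Longrightarrow> Finf M F \<rho> \<gamma> j Z \<in> Zsp M F j"
proof -
  assume j: "l \<le> j"
  have m: "Finf M F \<rho> \<gamma> j Z \<in> borel_measurable (F j)"
    unfolding Finf_def by (rule borel_measurable_lim_metric) (use nest_Zsp[OF j] in \<open>auto simp: Zsp_def\<close>)
  obtain C where C: "AE x in M. \<bar>nest M F \<rho> \<gamma> 0 j Z x\<bar> \<le> C"
    using nest_Zsp[OF j, of 0] by (auto simp: Zsp_def)
  have "AE x in M. \<bar>Finf M F \<rho> \<gamma> j Z x\<bar> \<le> C + \<gamma>^j * B / (1-\<gamma>)"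
    using C Finf_conv[OF j] by eventually_elim (auto dest!: spec[of _ 0])
  then show ?thesis using m by (auto simp: Zsp_def)
qed

lemma Finf_rec: "l \<le> j \<Longrightarrow> AE x in M. Finf M F \<rho> \<gamma> j Z x = \<gamma>^(j-1) * Z j x + rop M F \<rho> (Suc j) (Finf M F \<rho> \<gamma> (Suc j) Z) x"
proof -
  assume j: "l \<le> j"
  have t: "2 \<le> Suc j" using j l1 by simp
  define R where "R = rop M F \<rho> (Suc j)"
  define b where "b n = \<gamma>^(Suc j) * B * \<gamma>^n / (1-\<gamma>)" for n
  have b0: "b \<longlonglongrightarrow> 0" unfolding b_def using g0 g1
    by (auto intro!: tendsto_eq_intros LIMSEQ_power_zero)
  have sj: "l \<le> Suc j" using j by simp
  have "\<forall>n. AE x in M. \<bar>R (nest M F \<rho> \<gamma> n (Suc j) Z) x - R (Finf M F \<rho> \<gamma> (Suc j) Z) x\<bar> \<le> b n"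
  proof
    fix n
    have "AE x in M. \<bar>nest M F \<rho> \<gamma> n (Suc j) Z x - Finf M F \<rho> \<gamma> (Suc j) Z x\<bar> \<le> b n"
      using Finf_conv[OF sj] unfolding b_def by eventually_elim (auto simp: abs_minus_commute)
    then show "AE x in M. \<bar>R (nest M F \<rho> \<gamma> n (Suc j) Z) x - R (Finf M F \<rho> \<gamma> (Suc j) Z) x\<bar> \<le> b n"
      unfolding R_def using j by (intro rop_lip[OF t] nest_Zsp Finf_Zsp) auto
  qed
  then have A2: "AE x in M. \<forall>n. \<bar>R (nest M F \<rho> \<gamma> n (Suc j) Z) x - R (Finf M F \<rho> \<gamma> (Suc j) Z) x\<bar> \<le> b n"
    unfolding AE_all_countable .
  show ?thesis using A2 Finf_conv[OF j] unfolding R_def[symmetric]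
  proof eventually_elim
    case (elim x)
    define a where "a = R (Finf M F \<rho> \<gamma> (Suc j) Z) x"
    have T: "(\<lambda>n. R (nest M F \<rho> \<gamma> n (Suc j) Z) x) \<longlonglongrightarrow> a"
    proof (rule tendsto_sandwich)
      show "\<forall>\<^sub>F n in sequentially. a - b n \<le> R (nest M F \<rho> \<gamma> n (Suc j) Z) x"
      proof (intro always_eventually allI)
        fix n
        have "\<bar>R (nest M F \<rho> \<gamma> n (Suc j) Z) x - R (Finf M F \<rho> \<gamma> (Suc j) Z) x\<bar> \<le> b n"
          using elim(1) by blast
        then show "a - b n \<le> R (nest M F \<rho> \<gamma> n (Suc j) Z) x" unfolding a_def abs_le_iff by linarith
      qed
      show "\<forall>\<^sub>F n in sequentially. R (nest M F \<rho> \<gamma> n (Suc j) Z) x \<le> a + b n"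
      proof (intro always_eventually allI)
        fix n
        have "\<bar>R (nest M F \<rho> \<gamma> n (Suc j) Z) x - R (Finf M F \<rho> \<gamma> (Suc j) Z) x\<bar> \<le> b n"
          using elim(1) by blast
        then show "R (nest M F \<rho> \<gamma> n (Suc j) Z) x \<le> a + b n" unfolding a_def abs_le_iff by linarith
      qed
      show "(\<lambda>n. a - b n) \<longlonglongrightarrow> a" using tendsto_diff[OF tendsto_const b0, of a] by simp
      show "(\<lambda>n. a + b n) \<longlonglongrightarrow> a" using tendsto_add[OF tendsto_const b0, of a] by simp
    qed
    have L1: "(\<lambda>n. nest M F \<rho> \<gamma> (Suc n) j Z x) \<longlonglongrightarrow> \<gamma>^(j-1) * Z j x + a"
      unfolding nest.simps R_def[symmetric] by (intro tendsto_add tendsto_const T)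
    have L2: "(\<lambda>n. nest M F \<rho> \<gamma> (Suc n) j Z x) \<longlonglongrightarrow> Finf M F \<rho> \<gamma> j Z x"
      using elim(2) LIMSEQ_Suc by blast
    show ?case using LIMSEQ_unique[OF L2 L1] unfolding a_def .
  qed
qed

end


lemma bs_bound: "bounded_seq M F l Z \<Longrightarrow> \<exists>B. \<forall>i. l \<le> i \<longrightarrow> (AE x in M. \<bar>Z i x\<bar> \<le> B)"
  by (auto simp: bounded_seq_def)

lemma tc:
  assumes l1: "1 \<le> l" and lk: "l < k"
    and bZ: "bounded_seq M F l Z" and bW: "bounded_seq M F l W"
    and eq: "\<And>i. l \<le> i \<Longrightarrow> i \<le> k - 1 \<Longrightarrow> AE x in M. Z i x = W i x"
    and hk: "AE x in M. Finf M F \<rho> \<gamma> k Z x \<ge> Finf M F \<rho> \<gamma> k W x"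
  shows "AE x in M. Finf M F \<rho> \<gamma> l Z x \<ge> Finf M F \<rho> \<gamma> l W x"
proof -
  obtain BZ where BZ: "\<And>i. l \<le> i \<Longrightarrow> AE x in M. \<bar>Z i x\<bar> \<le> BZ" using bs_bound[OF bZ] by blast
  obtain BW where BW: "\<And>i. l \<le> i \<Longrightarrow> AE x in M. \<bar>W i x\<bar> \<le> BW" using bs_bound[OF bW] by blast
  have "d \<le> k - l \<Longrightarrow> AE x in M. Finf M F \<rho> \<gamma> (k-d) Z x \<ge> Finf M F \<rho> \<gamma> (k-d) W x" for d
  proof (induction d)
    case 0 then show ?case using hk by simp
  next
    case (Suc d)
    define j where "j = k - Suc d"
    have j: "l \<le> j" "j \<le> k - 1" "Suc j = k - d" using Suc.prems lk unfolding j_def by auto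
    have t: "2 \<le> Suc j" using j l1 by simp
    have IH: "AE x in M. Finf M F \<rho> \<gamma> (Suc j) Z x \<ge> Finf M F \<rho> \<gamma> (Suc j) W x"
      using Suc.IH Suc.prems j(3) by simp
    have sj: "l \<le> Suc j" using j by simp
    have fZ: "Finf M F \<rho> \<gamma> (Suc j) Z \<in> Zsp M F (Suc j)"
      by (rule Finf_Zsp[OF bZ l1, where B=BZ]) (use BZ sj in auto)
    have fW: "Finf M F \<rho> \<gamma> (Suc j) W \<in> Zsp M F (Suc j)"
      by (rule Finf_Zsp[OF bW l1, where B=BW]) (use BW sj in auto)
    have mo: "AE x in M. rop M F \<rho> (Suc j) (Finf M F \<rho> \<gamma> (Suc j) W) x \<le> rop M F \<rho> (Suc j) (Finf M F \<rho> \<gamma> (Suc j) Z) x"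
      by (rule rop_mono[OF t fW fZ IH])
    have rZ: "AE x in M. Finf M F \<rho> \<gamma> j Z x = \<gamma>^(j-1) * Z j x + rop M F \<rho> (Suc j) (Finf M F \<rho> \<gamma> (Suc j) Z) x"
      by (rule Finf_rec[OF bZ l1, where B=BZ]) (use BZ j(1) in auto)
    have rW: "AE x in M. Finf M F \<rho> \<gamma> j W x = \<gamma>^(j-1) * W j x + rop M F \<rho> (Suc j) (Finf M F \<rho> \<gamma> (Suc j) W) x"
      by (rule Finf_rec[OF bW l1, where B=BW]) (use BW j(1) in auto)
    have "AE x in M. Finf M F \<rho> \<gamma> j Z x \<ge> Finf M F \<rho> \<gamma> j W x"
      using rZ rW mo eq[OF j(1,2)]
      by eventually_elim (use g0 in simp)
    then show ?case unfolding j_def .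
  qed
  from this[of "k - l"] show ?thesis using lk by simp
qed

end

theorem theorem1:
  fixes M :: "'a measure" and F :: "nat \<Rightarrow> 'a measure"
    and \<rho> :: "nat \<Rightarrow> ('a \<Rightarrow> real) \<Rightarrow> ('a \<Rightarrow> real)"
    and \<gamma> :: real and l k :: nat and Z W :: "nat \<Rightarrow> 'a \<Rightarrow> real"
  assumes "prob_space M"
    and "\<And>t. t \<ge> 1 \<Longrightarrow> subalgebra M (F t)"
    and "\<And>t. t \<ge> 1 \<Longrightarrow> sets (F t) \<subseteq> sets (F (Suc t))"
    and "sets (F 1) = {{}, space M}"
    and "\<And>t. t \<ge> 2 \<Longrightarrow> coherent_one_step M F t (\<rho> t)"
    and "0 < \<gamma>" and "\<gamma> < 1"
    and "1 \<le> l" and "l < k"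
    and "bounded_seq M F l Z" and "bounded_seq M F l W"
    and "\<And>i. l \<le> i \<Longrightarrow> i \<le> k - 1 \<Longrightarrow> AE x in M. Z i x = W i x"
    and "AE x in M. Finf M F \<rho> \<gamma> k Z x \<ge> Finf M F \<rho> \<gamma> k W x"
  shows "AE x in M. Finf M F \<rho> \<gamma> l Z x \<ge> Finf M F \<rho> \<gamma> l W x"
proof -
  interpret R: rsetting M F \<rho> \<gamma>
    by (intro rsetting.intro rsetting_axioms.intro) (use assms in auto)
  show ?thesis by (rule R.tc) (use assms in auto)
qed

end
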